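(* Assume $N\ge n$. For every matrix $U\in\mathbb{R}^{n\times N}$ with $UU^T=I_n$, the coefficient matrix $$F=\begin{bmatrix}\mathbb{E}[f(\Delta)] & L\,U\,W_1^{-1/2}\end{bmatrix}\in\mathbb{R}^{n\times(N+1)}$$ yields a PC approximation $\hat f(\Delta)=F\Phi(\Delta)$ with exact first and second moments, i.e. $$\mathbb{E}[\hat f(\Delta)]=\mathbb{E}[f(\Delta)],\qquad \mathbb{E}[\hat f(\Delta)\hat f(\Delta)^T]=F W F^T=\mathbb{E}[f(\Delta)f(\Delta)^T].$$ Conversely, every $F\in\mathbb{R}^{n\times(N+1)}$ satisfying these two moment equalities is of this form for some $U\in\mathbb{R}^{n\times N}$ with $UU^T=I_n$.
   Context: Let $\Delta$ be a random vector taking values in $D\subseteq\mathbb{R}^d$ with probability density $p$, and $\mathbb{E}[g(\Delta)]=\int_D g(\Delta)p(\Delta)\,d\Delta$. Let $f:D\to\mathbb{R}^n$ have square-integrable components. Let $\phi_0\equiv 1,\phi_1,\dots,\phi_N$ be polynomials on $D$, orthogonal with respect to $p$: $\mathbb{E}[\phi_i(\Delta)\phi_j(\Delta)]=0$ for $i\neq j$, with $\mathbb{E}[\phi_i(\Delta)^2]>0$ for all $i$. Set $\Phi(\Delta)=[\phi_0(\Delta),\dots,\phi_N(\Delta)]^T$ (so $\mathbb{E}[\Phi(\Delta)]=[1,0,\dots,0]^T$), $W=\mathbb{E}[\Phi\Phi^T]=\mathrm{diag}(\mathbb{E}[\phi_0^2],\dots,\mathbb{E}[\phi_N^2])$, and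 $W_1=\mathrm{diag}(\mathbb{E}[\phi_1^2],\dots,\mathbb{E}[\phi_N^2])$. A PC approximation of $f$ with coefficient matrix $F\in\mathbb{R}^{n\times(N+1)}$ is $\hat f(\Delta)=F\Phi(\Delta)$. Let $L\in\mathbb{R}^{n\times n}$ be any matrix (e.g. a Cholesky factor) with $LL^T=\mathbb{E}[f f^T]-\mathbb{E}[f]\mathbb{E}[f]^T$ (the covariance of $f(\Delta)$). *)

theory Defs
  imports "HOL-Probability.Probability" "Jordan_Normal_Form.Matrix"
begin

definition poly_fun :: "('a::euclidean_space \<Rightarrow> real) \<Rightarrow> bool" where
  "poly_fun q \<longleftrightarrow> (\<exists>K c. finite K \<and>
      (\<forall>x. q x = (\<Sum>k\<in>K. c k * (\<Prod>b\<in>Basis. (x \<bullet> b) ^ k b))))"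

definition dens_measure :: "'a::euclidean_space set \<Rightarrow> ('a \<Rightarrow> real) \<Rightarrow> 'a measure" where
  "dens_measure D p = density lborel (\<lambda>x. ennreal (indicator D x * p x))"

definition Expect :: "'a::euclidean_space set \<Rightarrow> ('a \<Rightarrow> real) \<Rightarrow> ('a \<Rightarrow> real) \<Rightarrow> real" where
  "Expect D p g = integral\<^sup>L (dens_measure D p) g"

end

theory Submission
  imports Defs
begin

definition ipr :: "nat \<Rightarrow> (nat \<Rightarrow> real) \<Rightarrow> (nat \<Rightarrow> real) \<Rightarrow> real" where
  "ipr m x y = (\<Sum>c<m. x c * y c)"

definition orthon :: "nat \<Rightarrow> nat \<Rightarrow> (nat \<Rightarrow> nat \<Rightarrow> real) \<Rightarrow> bool" where
  "orthon m k q \<longleftrightarrow> (\<forall>j<k. \<forall>j'<k. ipr m (q j) (q j') = (if j = j' then 1 else 0))"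

definition resid :: "nat \<Rightarrow> nat \<Rightarrow> (nat \<Rightarrow> nat \<Rightarrow> real) \<Rightarrow> (nat \<Rightarrow> real) \<Rightarrow> nat \<Rightarrow> real" where
  "resid m k q x = (\<lambda>c. x c - (\<Sum>j<k. ipr m x (q j) * q j c))"

lemma ipr_comm: "ipr m x y = ipr m y x"
  unfolding ipr_def by (simp add: mult.commute)

lemma ipr_lin2: "ipr m x (\<lambda>c. \<Sum>j\<in>A. f j * y j c) = (\<Sum>j\<in>A. f j * ipr m x (y j))"
  unfolding ipr_def
  by (simp add: sum_distrib_left sum_distrib_right mult.assoc mult.left_commute sum.swap[of _ A])

lemma ipr_lin1: "ipr m (\<lambda>c. \<Sum>j\<in>A. f j * y j c) x = (\<Sum>j\<in>A. f j * ipr m (y j) x)"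
  using ipr_lin2[where m=m and x=x and A=A and f=f and y=y] by (simp add: ipr_comm)

lemma ipr_diff2: "ipr m x (\<lambda>c. y c - z c) = ipr m x y - ipr m x z"
  unfolding ipr_def by (simp add: right_diff_distrib sum_subtractf)

lemma ipr_diff1: "ipr m (\<lambda>c. y c - z c) x = ipr m y x - ipr m z x"
  unfolding ipr_def by (simp add: left_diff_distrib sum_subtractf)

lemma ipr_scale2: "ipr m x (\<lambda>c. y c / a) = ipr m x y / a"
  unfolding ipr_def by (simp add: sum_divide_distrib)

lemma ipr_scale1: "ipr m (\<lambda>c. y c / a) x = ipr m y x / a"
  unfolding ipr_def by (simp add: sum_divide_distrib)

lemma ipr_cong1: "(\<And>c. c < m \<Longrightarrow> x c = x' c) \<Longrightarrow> ipr m x y = ipr m x' y"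
  unfolding ipr_def by (intro sum.cong) auto

lemma ipr_self_nonneg: "ipr m x x \<ge> 0"
  unfolding ipr_def by (intro sum_nonneg) auto

lemma ipr_self_zero: "ipr m x x = 0 \<Longrightarrow> c < m \<Longrightarrow> x c = 0"
  unfolding ipr_def by (subst (asm) sum_nonneg_eq_0_iff) auto

lemma collapse: "orthon m k q \<Longrightarrow> j < k \<Longrightarrow> ipr m (q j) (\<lambda>c. \<Sum>j'<k. f j' * q j' c) = f j"
proof -
  assume o: "orthon m k q" and j: "j < k"
  have "ipr m (q j) (\<lambda>c. \<Sum>j'<k. f j' * q j' c) = (\<Sum>j'<k. f j' * (if j = j' then 1 else 0))"
    unfolding ipr_lin2 using o j unfolding orthon_def by (intro sum.cong) auto
  also have "\<dots> = f j" using j by (simp add: if_distrib cong: if_cong)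
  finally show ?thesis .
qed

lemma resid_orth: assumes "orthon m k q" "j < k" shows "ipr m (resid m k q x) (q j) = 0"
proof -
  have "ipr m (resid m k q x) (q j) = ipr m x (q j) - ipr m (q j) (\<lambda>c. \<Sum>j'<k. ipr m x (q j') * q j' c)"
    unfolding resid_def ipr_diff1 by (simp add: ipr_comm)
  also have "\<dots> = 0" using collapse[OF assms] by simp
  finally show ?thesis .
qed

lemma resid_x: assumes "orthon m k q" shows "ipr m x (resid m k q x) = ipr m (resid m k q x) (resid m k q x)"
proof -
  have "ipr m (resid m k q x) (resid m k q x) = ipr m (resid m k q x) x - ipr m (resid m k q x) (\<lambda>c. \<Sum>j<k. ipr m x (q j) * q j c)"
    unfolding resid_def[of m k q x] ipr_diff2 by (simp add: resid_def)
  also have "ipr m (resid m k q x) (\<lambda>c. \<Sum>j<k. ipr m x (q j) * q j c) = 0"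
    unfolding ipr_lin2 using resid_orth[OF assms] by simp
  finally show ?thesis by (simp add: ipr_comm)
qed

lemma resid_norm: assumes "orthon m k q"
  shows "ipr m (resid m k q x) (resid m k q x) = ipr m x x - (\<Sum>j<k. (ipr m x (q j))^2)"
proof -
  have "ipr m x (resid m k q x) = ipr m x x - (\<Sum>j<k. ipr m x (q j) * ipr m x (q j))"
    unfolding resid_def ipr_diff2 ipr_lin2 by simp
  then show ?thesis using resid_x[OF assms] by (simp add: power2_eq_square)
qed

definition evc :: "nat \<Rightarrow> nat \<Rightarrow> real" where "evc i = (\<lambda>c. if c = i then 1 else 0)"

lemma ipr_evec: "i < m \<Longrightarrow> ipr m (evc i) y = y i"
proof -
  assume "i < m"
  have "ipr m (evc i) y = (\<Sum>c<m. if c = i then y c else 0)"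
    unfolding ipr_def evc_def by (intro sum.cong) auto
  then show ?thesis using \<open>i < m\<close> by simp
qed

lemma evc_same[simp]: "evc i i = 1" and evc_other: "i \<noteq> i' \<Longrightarrow> evc i i' = 0"
  unfolding evc_def by auto

lemma sum_sq_coords: "(\<Sum>i<m. \<Sum>j<k. (q j i)^2) = (\<Sum>j<k. ipr m (q j) (q j))"
  unfolding ipr_def by (simp add: sum.swap[of _ "{..<m}"] power2_eq_square)

lemma orthon_trace: "orthon m k q \<Longrightarrow> (\<Sum>i<m. \<Sum>j<k. (q j i)^2) = real k"
  unfolding sum_sq_coords orthon_def by simp

lemma bessel_e: assumes "orthon m k q" "i < m"
  shows "ipr m (resid m k q (evc i)) (resid m k q (evc i)) = 1 - (\<Sum>j<k. (q j i)^2)"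
  unfolding resid_norm[OF assms(1)] using assms(2)
  by (simp add: ipr_evec)

lemma extend1: assumes o: "orthon m k q" and km: "k < m"
  shows "\<exists>v. ipr m v v = 1 \<and> (\<forall>j<k. ipr m v (q j) = 0)"
proof -
  have "\<exists>i<m. (\<Sum>j<k. (q j i)^2) < 1"
  proof (rule ccontr)
    assume "\<not> ?thesis"
    then have "\<forall>i<m. (\<Sum>j<k. (q j i)^2) \<ge> 1" by auto
    then have "(\<Sum>i<m. (1::real)) \<le> (\<Sum>i<m. \<Sum>j<k. (q j i)^2)" by (intro sum_mono) auto
    then show False using orthon_trace[OF o] km by simp
  qed
  then obtain i where i: "i < m" "(\<Sum>j<k. (q j i)^2) < 1" by auto
  define r where "r = resid m k q (evc i)"
  define \<nu> where "\<nu> = sqrt (ipr m r r)"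
  have pos: "ipr m r r > 0" unfolding r_def bessel_e[OF o i(1)] using i(2) by simp
  then have nu: "\<nu> > 0" "\<nu> * \<nu> = ipr m r r" unfolding \<nu>_def by auto
  show ?thesis
  proof (intro exI[of _ "\<lambda>c. r c / \<nu>"] conjI allI impI)
    show "ipr m (\<lambda>c. r c / \<nu>) (\<lambda>c. r c / \<nu>) = 1" unfolding ipr_scale1 ipr_scale2 using nu pos
      by (simp add: field_simps)
    fix j assume "j < k"
    then show "ipr m (\<lambda>c. r c / \<nu>) (q j) = 0" unfolding ipr_scale1 r_def using resid_orth[OF o] by simp
  qed
qed

lemma extend: assumes "orthon m k q" "k \<le> n" "n \<le> m"
  shows "\<exists>q'. orthon m n q' \<and> (\<forall>j<k. q' j = q j)"
  using assms(2,3)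
proof (induction n)
  case 0 then show ?case using assms(1) by (intro exI[of _ q]) (auto simp: orthon_def)
next
  case (Suc n)
  show ?case
  proof (cases "k = Suc n")
    case True then show ?thesis using assms(1) by auto
  next
    case False
    then obtain q' where q': "orthon m n q'" "\<forall>j<k. q' j = q j" using Suc by auto
    obtain v where v: "ipr m v v = 1" "\<forall>j<n. ipr m v (q' j) = 0"
      using extend1[OF q'(1)] Suc by auto
    have o2: "orthon m (Suc n) (q'(n := v))"
      using q'(1) v unfolding orthon_def by (auto simp: less_Suc_eq ipr_comm)
    have e2: "\<forall>j<k. (q'(n := v)) j = q j" using q'(2) False Suc by auto
    show ?thesis using o2 e2 by blast
  qed
qed

lemma complete: assumes o: "orthon n n q" and i: "i < n" and i': "i' < n"
  shows "(\<Sum>j<n. q j i * q j i') = (if i = i' then 1 else 0)"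
proof -
  have le: "\<forall>i<n. (\<Sum>j<n. (q j i)^2) \<le> 1"
  proof (intro allI impI)
    fix i assume "i < n"
    from bessel_e[OF o this] ipr_self_nonneg[of n "resid n n q (evc i)"]
    show "(\<Sum>j<n. (q j i)^2) \<le> 1" by linarith
  qed
  have "(\<Sum>i<n. 1 - (\<Sum>j<n. (q j i)^2)) = 0"
    using orthon_trace[OF o] by (simp add: sum_subtractf)
  then have "\<forall>i\<in>{..<n}. 1 - (\<Sum>j<n. (q j i)^2) = 0"
    using le by (subst (asm) sum_nonneg_eq_0_iff) auto
  then have "ipr n (resid n n q (evc i)) (resid n n q (evc i)) = 0"
    using bessel_e[OF o i] i by simp
  then have "resid n n q (evc i) i' = 0" using ipr_self_zero i' by blast
  then have "evc i i' = (\<Sum>j<n. q j i * q j i')" unfolding resid_def using i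
    by (simp add: ipr_evec)
  then show ?thesis by (cases "i = i'") (auto simp: evc_other)
qed

lemma rep_ip: "(\<And>c. c < m \<Longrightarrow> x c = (\<Sum>j<k. f j * q j c)) \<Longrightarrow> ipr m x z = (\<Sum>j<k. f j * ipr m (q j) z)"
  by (subst ipr_cong1[where x'="\<lambda>c. \<Sum>j<k. f j * q j c"]) (auto simp: ipr_lin1)

lemma orthon_ext: assumes "orthon m k q" "ipr m v v = 1" "\<forall>j<k. ipr m v (q j) = 0"
  shows "orthon m (Suc k) (q(k := v))"
  using assms unfolding orthon_def by (auto simp: less_Suc_eq ipr_comm)

lemma ipr_res: "ipr m z (resid m k q x) = ipr m z x - (\<Sum>j<k. ipr m x (q j) * ipr m z (q j))"
  unfolding resid_def ipr_diff2 ipr_lin2 by simp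

lemma new_vec:
  assumes o: "orthon m k q" and pos: "ipr m (resid m k q x) (resid m k q x) > 0"
  defines "q' \<equiv> q(k := (\<lambda>c. resid m k q x c / sqrt (ipr m (resid m k q x) (resid m k q x))))"
  shows "orthon m (Suc k) q'"
    and "\<forall>c<m. x c = (\<Sum>j<Suc k. ipr m x (q' j) * q' j c)"
    and "\<And>z. \<forall>c<m. z c = (\<Sum>j<k. ipr m z (q j) * q j c) \<Longrightarrow>
             \<forall>c<m. z c = (\<Sum>j<Suc k. ipr m z (q' j) * q' j c)"
proof -
  define r where "r = resid m k q x"
  define \<nu> where "\<nu> = sqrt (ipr m r r)"
  have rr: "ipr m r r > 0" using pos r_def by simp
  then have nu: "\<nu> > 0" "\<nu> * \<nu> = ipr m r r" unfolding \<nu>_def by auto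
  have q'eq: "q' = q(k := (\<lambda>c. r c / \<nu>))" unfolding q'_def r_def \<nu>_def by simp
  have qj: "\<And>j. j < k \<Longrightarrow> q' j = q j" unfolding q'eq by simp
  have sumk: "\<And>f. (\<Sum>j<k. f (q' j)) = (\<Sum>j<k. f (q j))"
    by (intro sum.cong) (auto simp: qj)
  show "orthon m (Suc k) q'" unfolding q'eq
  proof (rule orthon_ext[OF o])
    show "ipr m (\<lambda>c. r c / \<nu>) (\<lambda>c. r c / \<nu>) = 1" unfolding ipr_scale1 ipr_scale2 using nu rr
      by (simp add: field_simps)
    show "\<forall>j<k. ipr m (\<lambda>c. r c / \<nu>) (q j) = 0" unfolding ipr_scale1 r_def using resid_orth[OF o] by simp
  qed
  show "\<forall>c<m. x c = (\<Sum>j<Suc k. ipr m x (q' j) * q' j c)"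
  proof (intro allI impI)
    fix c assume c: "c < m"
    have "ipr m x (q' k) * q' k c = (ipr m x r / \<nu>) * (r c / \<nu>)" unfolding q'eq by (simp add: ipr_scale2)
    also have "ipr m x r = \<nu> * \<nu>" unfolding r_def resid_x[OF o] using nu r_def by simp
    finally have "ipr m x (q' k) * q' k c = r c" using nu rr by (simp add: field_simps)
    then show "x c = (\<Sum>j<Suc k. ipr m x (q' j) * q' j c)"
      using sumk[of "\<lambda>v. ipr m x v * v c"] unfolding r_def resid_def by simp
  qed
  fix z assume z: "\<forall>c<m. z c = (\<Sum>j<k. ipr m z (q j) * q j c)"
  have "ipr m z r = (\<Sum>j<k. ipr m z (q j) * ipr m (q j) r)"
    by (rule rep_ip) (use z in auto)
  also have "\<dots> = 0" using resid_orth[OF o] by (simp add: ipr_comm r_def)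
  finally have zr: "ipr m z r = 0" .
  have "ipr m z (q' k) = 0" unfolding q'eq using zr by (simp add: ipr_scale2)
  then show "\<forall>c<m. z c = (\<Sum>j<Suc k. ipr m z (q' j) * q' j c)"
    using z sumk[of "\<lambda>v. ipr m z v * v _"] by simp
qed

lemma gs:
  assumes "\<forall>i<r. \<forall>j<r. ipr m (a i) (a j) = ipr p (b i) (b j)"
  shows "\<exists>k q s. k \<le> r \<and> orthon m k q \<and> orthon p k s \<and>
     (\<forall>i<r. \<forall>c<m. a i c = (\<Sum>j<k. ipr m (a i) (q j) * q j c)) \<and>
     (\<forall>i<r. \<forall>c<p. b i c = (\<Sum>j<k. ipr p (b i) (s j) * s j c)) \<and>
     (\<forall>x y. (\<forall>l<r. ipr m x (a l) = ipr p y (b l)) \<longrightarrow> (\<forall>j<k. ipr m x (q j) = ipr p y (s j)))"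
  using assms
proof (induction r)
  case 0 show ?case by (intro exI[of _ 0]) (auto simp: orthon_def)
next
  case (Suc r)
  from Suc.prems have G: "\<forall>i<r. \<forall>j<r. ipr m (a i) (a j) = ipr p (b i) (b j)" by auto
  obtain k q s where k: "k \<le> r" and oq: "orthon m k q" and os: "orthon p k s"
    and ra: "\<forall>i<r. \<forall>c<m. a i c = (\<Sum>j<k. ipr m (a i) (q j) * q j c)"
    and rb: "\<forall>i<r. \<forall>c<p. b i c = (\<Sum>j<k. ipr p (b i) (s j) * s j c)"
    and inv: "\<forall>x y. (\<forall>l<r. ipr m x (a l) = ipr p y (b l)) \<longrightarrow> (\<forall>j<k. ipr m x (q j) = ipr p y (s j))"
    using Suc.IH[OF G] by blast
  define x where "x = a r"
  define y where "y = b r"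
  have Gl: "\<forall>l<r. ipr m x (a l) = ipr p y (b l)" using Suc.prems x_def y_def by auto
  have T: "\<forall>j<k. ipr m x (q j) = ipr p y (s j)" using inv Gl by blast
  have Gxx: "ipr m x x = ipr p y y" using Suc.prems by (auto simp: x_def y_def)
  define ra' where "ra' = resid m k q x"
  define rb' where "rb' = resid p k s y"
  have sT: "(\<Sum>j<k. (ipr m x (q j))^2) = (\<Sum>j<k. (ipr p y (s j))^2)"
    using T by (intro sum.cong) auto
  have nn: "ipr m ra' ra' = ipr p rb' rb'" unfolding ra'_def rb'_def resid_norm[OF oq] resid_norm[OF os]
    using sT Gxx by simp
  have invS: "\<forall>x' y'. (\<forall>l<Suc r. ipr m x' (a l) = ipr p y' (b l)) \<longrightarrow> ipr m x' ra' = ipr p y' rb'"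
  proof (intro allI impI)
    fix x' y' assume h: "\<forall>l<Suc r. ipr m x' (a l) = ipr p y' (b l)"
    then have h1: "\<forall>j<k. ipr m x' (q j) = ipr p y' (s j)" using inv by auto
    have h2: "ipr m x' x = ipr p y' y" using h x_def y_def by auto
    have "(\<Sum>j<k. ipr m x (q j) * ipr m x' (q j)) = (\<Sum>j<k. ipr p y (s j) * ipr p y' (s j))"
      using T h1 by (intro sum.cong) auto
    then show "ipr m x' ra' = ipr p y' rb'" unfolding ra'_def rb'_def ipr_res using h2 by simp
  qed
  show ?case
  proof (cases "ipr m ra' ra' = 0")
    case True
    then have za: "\<forall>c<m. ra' c = 0" using ipr_self_zero by blast
    have zb: "\<forall>c<p. rb' c = 0" using nn True ipr_self_zero[of p rb'] by simp
    have xa: "\<forall>c<m. x c = (\<Sum>j<k. ipr m x (q j) * q j c)" using za unfolding ra'_def resid_def by auto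
    have yb: "\<forall>c<p. y c = (\<Sum>j<k. ipr p y (s j) * s j c)" using zb unfolding rb'_def resid_def by auto
    have ra2: "\<forall>i<Suc r. \<forall>c<m. a i c = (\<Sum>j<k. ipr m (a i) (q j) * q j c)"
      unfolding less_Suc_eq using ra xa x_def by blast
    have rb2: "\<forall>i<Suc r. \<forall>c<p. b i c = (\<Sum>j<k. ipr p (b i) (s j) * s j c)"
      unfolding less_Suc_eq using rb yb y_def by blast
    have inv2: "\<forall>x y. (\<forall>l<Suc r. ipr m x (a l) = ipr p y (b l)) \<longrightarrow> (\<forall>j<k. ipr m x (q j) = ipr p y (s j))"
      using inv by simp
    show ?thesis
      apply (rule exI[of _ k], rule exI[of _ q], rule exI[of _ s])
      using k oq os ra2 rb2 inv2 by simp
  next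
    case False
    then have pa: "ipr m ra' ra' > 0" using ipr_self_nonneg[of m ra'] by linarith
    have pb: "ipr p rb' rb' > 0" using pa nn by simp
    define q' where "q' = q(k := (\<lambda>c. resid m k q x c / sqrt (ipr m (resid m k q x) (resid m k q x))))"
    define s' where "s' = s(k := (\<lambda>c. resid p k s y c / sqrt (ipr p (resid p k s y) (resid p k s y))))"
    note A = new_vec[OF oq pa[unfolded ra'_def], folded q'_def]
    note B = new_vec[OF os pb[unfolded rb'_def], folded s'_def]
    have inv': "\<forall>x' y'. (\<forall>l<Suc r. ipr m x' (a l) = ipr p y' (b l)) \<longrightarrow> (\<forall>j<Suc k. ipr m x' (q' j) = ipr p y' (s' j))"
    proof (intro allI impI)
      fix x' y' j assume h: "\<forall>l<Suc r. ipr m x' (a l) = ipr p y' (b l)" and j: "j < Suc k"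
      show "ipr m x' (q' j) = ipr p y' (s' j)"
      proof (cases "j = k")
        case True
        then show ?thesis using invS h nn unfolding q'_def s'_def ra'_def rb'_def
          by (simp add: ipr_scale2)
      next
        case False
        then show ?thesis using inv h j unfolding q'_def s'_def by auto
      qed
    qed
    have ra2: "\<forall>i<Suc r. \<forall>c<m. a i c = (\<Sum>j<Suc k. ipr m (a i) (q' j) * q' j c)"
    proof (intro allI impI)
      fix i c assume i: "i < Suc r" and c: "c < m"
      show "a i c = (\<Sum>j<Suc k. ipr m (a i) (q' j) * q' j c)"
      proof (cases "i = r")
        case True then show ?thesis using A(2) c x_def by blast
      next
        case False
        then have "i < r" using i by simp
        then have "\<forall>c<m. a i c = (\<Sum>j<k. ipr m (a i) (q j) * q j c)" using ra by blast
        from A(3)[OF this] c show ?thesis by blast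
      qed
    qed
    have rb2: "\<forall>i<Suc r. \<forall>c<p. b i c = (\<Sum>j<Suc k. ipr p (b i) (s' j) * s' j c)"
    proof (intro allI impI)
      fix i c assume i: "i < Suc r" and c: "c < p"
      show "b i c = (\<Sum>j<Suc k. ipr p (b i) (s' j) * s' j c)"
      proof (cases "i = r")
        case True then show ?thesis using B(2) c y_def by blast
      next
        case False
        then have "i < r" using i by simp
        then have "\<forall>c<p. b i c = (\<Sum>j<k. ipr p (b i) (s j) * s j c)" using rb by blast
        from B(3)[OF this] c show ?thesis by blast
      qed
    qed
    show ?thesis
      apply (rule exI[of _ "Suc k"], rule exI[of _ q'], rule exI[of _ s'])
      using k A(1) B(1) ra2 rb2 inv' by simp
  qed
qed

lemma la_main:
  fixes Lf Hf :: "nat \<Rightarrow> nat \<Rightarrow> real"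
  assumes nN: "n \<le> N" and G: "\<forall>i<n. \<forall>j<n. ipr N (Hf i) (Hf j) = ipr n (Lf i) (Lf j)"
  shows "\<exists>Uf. (\<forall>i<n. \<forall>j<n. ipr N (Uf i) (Uf j) = (if i = j then 1 else 0)) \<and>
              (\<forall>i<n. \<forall>c<N. Hf i c = (\<Sum>k<n. Lf i k * Uf k c))"
proof -
  have G': "\<forall>i<n. \<forall>j<n. ipr n (Lf i) (Lf j) = ipr N (Hf i) (Hf j)" using G by simp
  obtain k q s where k: "k \<le> n" and oq: "orthon n k q" and os: "orthon N k s"
    and ra: "\<forall>i<n. \<forall>c<n. Lf i c = (\<Sum>j<k. ipr n (Lf i) (q j) * q j c)"
    and rb: "\<forall>i<n. \<forall>c<N. Hf i c = (\<Sum>j<k. ipr N (Hf i) (s j) * s j c)"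
    and inv: "\<forall>x y. (\<forall>l<n. ipr n x (Lf l) = ipr N y (Hf l)) \<longrightarrow> (\<forall>j<k. ipr n x (q j) = ipr N y (s j))"
    using gs[OF G'] by blast
  obtain Q where oQ: "orthon n n Q" and Qq: "\<forall>j<k. Q j = q j" using extend[OF oq k] by blast
  obtain S where oS: "orthon N n S" and Ss: "\<forall>j<k. S j = s j" using extend[OF os k nN] by blast
  define T where "T i j = (if j < k then ipr n (Lf i) (q j) else 0)" for i j
  have LQ: "\<forall>c<n. Lf i c = (\<Sum>j<n. T i j * Q j c)" if i: "i < n" for i
  proof (intro allI impI)
    fix c assume c: "c < n"
    have "(\<Sum>j<n. T i j * Q j c) = (\<Sum>j<k. ipr n (Lf i) (q j) * q j c)"
      by (rule sum.mono_neutral_cong_right) (use k Qq in \<open>auto simp: T_def\<close>)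
    then show "Lf i c = (\<Sum>j<n. T i j * Q j c)" using ra i c by simp
  qed
  have HS: "\<forall>c<N. Hf i c = (\<Sum>j<n. T i j * S j c)" if i: "i < n" for i
  proof (intro allI impI)
    fix c assume c: "c < N"
    have eq: "\<forall>j<k. ipr n (Lf i) (q j) = ipr N (Hf i) (s j)" using inv G' i by blast
    have "(\<Sum>j<n. T i j * S j c) = (\<Sum>j<k. ipr N (Hf i) (s j) * s j c)"
      by (rule sum.mono_neutral_cong_right) (use k Ss eq in \<open>auto simp: T_def\<close>)
    then show "Hf i c = (\<Sum>j<n. T i j * S j c)" using rb i c by simp
  qed
  have TQ: "ipr n (Lf i) (Q j) = T i j" if i: "i < n" and j: "j < n" for i j
  proof -
    have "ipr n (Lf i) (Q j) = ipr n (\<lambda>c. \<Sum>j'<n. T i j' * Q j' c) (Q j)"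
      by (rule ipr_cong1) (use LQ[OF i] in auto)
    also have "\<dots> = ipr n (Q j) (\<lambda>c. \<Sum>j'<n. T i j' * Q j' c)" by (rule ipr_comm)
    also have "\<dots> = T i j" by (rule collapse[OF oQ j])
    finally show ?thesis .
  qed
  define Uf where "Uf kk = (\<lambda>c. \<Sum>j<n. Q j kk * S j c)" for kk
  show ?thesis
  proof (intro exI[of _ Uf] conjI allI impI)
    fix a b assume a: "a < n" and b: "b < n"
    have "ipr N (Uf a) (Uf b) = (\<Sum>j<n. Q j a * ipr N (S j) (Uf b))" unfolding Uf_def[of a] ipr_lin1 ..
    also have "\<dots> = (\<Sum>j<n. Q j a * Q j b)"
      by (intro sum.cong refl) (simp add: Uf_def collapse[OF oS])
    also have "\<dots> = (if a = b then 1 else 0)" by (rule complete[OF oQ a b])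
    finally show "ipr N (Uf a) (Uf b) = (if a = b then 1 else 0)" .
  next
    fix i c assume i: "i < n" and c: "c < N"
    have "(\<Sum>kk<n. Lf i kk * Uf kk c) = (\<Sum>kk<n. \<Sum>j<n. Lf i kk * Q j kk * S j c)"
      unfolding Uf_def by (simp add: sum_distrib_left mult.assoc)
    also have "\<dots> = (\<Sum>j<n. \<Sum>kk<n. Lf i kk * Q j kk * S j c)" by (rule sum.swap)
    also have "\<dots> = (\<Sum>j<n. ipr n (Lf i) (Q j) * S j c)"
      unfolding ipr_def by (simp add: sum_distrib_right)
    also have "\<dots> = (\<Sum>j<n. T i j * S j c)" by (intro sum.cong refl) (simp add: TQ i)
    also have "\<dots> = Hf i c" using HS[OF i] c by simp
    finally show "Hf i c = (\<Sum>k<n. Lf i k * Uf k c)" by simp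
  qed
qed


lemma poly_fun_meas: assumes "poly_fun (q :: 'a::euclidean_space \<Rightarrow> real)"
  shows "q \<in> borel_measurable borel"
proof -
  obtain K c where K: "finite K" and q: "\<forall>x. q x = (\<Sum>k\<in>K. c k * (\<Prod>b\<in>Basis. (x \<bullet> b) ^ k b))"
    using assms unfolding poly_fun_def by blast
  have "q = (\<lambda>x. \<Sum>k\<in>K. c k * (\<Prod>b\<in>Basis. (x \<bullet> b) ^ k b))" using q by auto
  also have "\<dots> \<in> borel_measurable borel"
    by (intro borel_measurable_continuous_onI continuous_intros)
  finally show ?thesis .
qed

lemma abs_mult_le_sq: "\<bar>a * b\<bar> \<le> a\<^sup>2 + b\<^sup>2" for a b :: real
proof -
  have "0 \<le> (\<bar>a\<bar> - \<bar>b\<bar>)\<^sup>2" by simp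
  then have "2 * (\<bar>a\<bar> * \<bar>b\<bar>) \<le> a\<^sup>2 + b\<^sup>2" by (simp add: power2_eq_square algebra_simps)
  moreover have "0 \<le> \<bar>a\<bar> * \<bar>b\<bar>" by simp
  ultimately show ?thesis unfolding abs_mult by linarith
qed

lemma int_prod:
  fixes g h :: "'a \<Rightarrow> real"
  assumes "g \<in> borel_measurable M" "h \<in> borel_measurable M"
    "integrable M (\<lambda>x. (g x)\<^sup>2)" "integrable M (\<lambda>x. (h x)\<^sup>2)"
  shows "integrable M (\<lambda>x. g x * h x)"
proof -
  have i: "integrable M (\<lambda>x. (g x)\<^sup>2 + (h x)\<^sup>2)" using assms by simp
  have m: "(\<lambda>x. g x * h x) \<in> borel_measurable M" using assms by simp
  have ae: "AE x in M. norm (g x * h x) \<le> norm ((g x)\<^sup>2 + (h x)\<^sup>2)"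
    using abs_mult_le_sq by (intro AE_I2) (simp add: add_nonneg_nonneg)
  show ?thesis by (rule Bochner_Integration.integrable_bound[OF i m ae])
qed

lemma mult_entry:
  assumes "A \<in> carrier_mat a b" "B \<in> carrier_mat b c" "i < a" "j < c"
  shows "(A * B) $$ (i,j) = (\<Sum>k<b. A $$ (i,k) * B $$ (k,j))"
  using assms by (auto simp: scalar_prod_def atLeast0LessThan intro!: sum.cong)

theorem theorem1:
  fixes D :: "'a::euclidean_space set" and p :: "'a \<Rightarrow> real"
    and f :: "nat \<Rightarrow> 'a \<Rightarrow> real" and \<phi> :: "nat \<Rightarrow> 'a \<Rightarrow> real"
    and n N :: nat and L :: "real mat"
  defines "E \<equiv> Expect D p"
  defines "Ef \<equiv> vec n (\<lambda>i. E (f i))"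
  defines "Eff \<equiv> mat n n (\<lambda>(i,j). E (\<lambda>x. f i x * f j x))"
  defines "W \<equiv> mat (N+1) (N+1) (\<lambda>(i,j). if i = j then E (\<lambda>x. (\<phi> i x)\<^sup>2) else 0)"
  defines "W1_inv_sqrt \<equiv> mat N N (\<lambda>(i,j). if i = j then 1 / sqrt (E (\<lambda>x. (\<phi> (Suc i) x)\<^sup>2)) else 0)"
  defines "fhat \<equiv> (\<lambda>(F::real mat) i x. \<Sum>j\<le>N. F $$ (i,j) * \<phi> j x)"
  defines "Fof \<equiv> (\<lambda>U::real mat. mat n (N+1)
             (\<lambda>(i,j). if j = 0 then Ef $ i else (L * U * W1_inv_sqrt) $$ (i, j - 1)))"
  assumes D_meas: "D \<in> sets lborel"
    and p_meas: "p \<in> borel_measurable lborel" and p_nonneg: "\<And>x. x \<in> D \<Longrightarrow> p x \<ge> 0"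
    and prob: "prob_space (dens_measure D p)"
    and f_meas: "\<And>i. i < n \<Longrightarrow> f i \<in> borel_measurable lborel"
    and f_sq: "\<And>i. i < n \<Longrightarrow> integrable (dens_measure D p) (\<lambda>x. (f i x)\<^sup>2)"
    and phi_poly: "\<And>i. i \<le> N \<Longrightarrow> poly_fun (\<phi> i)"
    and phi0: "\<And>x. \<phi> 0 x = 1"
    and phi_sq: "\<And>i. i \<le> N \<Longrightarrow> integrable (dens_measure D p) (\<lambda>x. (\<phi> i x)\<^sup>2)"
    and orth: "\<And>i j. i \<le> N \<Longrightarrow> j \<le> N \<Longrightarrow> i \<noteq> j \<Longrightarrow> E (\<lambda>x. \<phi> i x * \<phi> j x) = 0"
    and pos: "\<And>i. i \<le> N \<Longrightarrow> E (\<lambda>x. (\<phi> i x)\<^sup>2) > 0"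
    and L: "L \<in> carrier_mat n n" "L * L\<^sup>T = Eff - mat n n (\<lambda>(i,j). Ef $ i * Ef $ j)"
    and Nn: "N \<ge> n"
  shows "(\<forall>U \<in> carrier_mat n N. U * U\<^sup>T = 1\<^sub>m n \<longrightarrow>
            (let F = Fof U in
              (\<forall>i<n. E (fhat F i) = E (f i)) \<and>
              mat n n (\<lambda>(i,j). E (\<lambda>x. fhat F i x * fhat F j x)) = F * W * F\<^sup>T \<and>
              F * W * F\<^sup>T = Eff))
       \<and> (\<forall>F \<in> carrier_mat n (N+1).
            (\<forall>i<n. E (fhat F i) = E (f i)) \<and>
            mat n n (\<lambda>(i,j). E (\<lambda>x. fhat F i x * fhat F j x)) = Eff
            \<longrightarrow> (\<exists>U \<in> carrier_mat n N. U * U\<^sup>T = 1\<^sub>m n \<and> F = Fof U))"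
proof -
  define M where "M = dens_measure D p"
  interpret P: prob_space M using prob M_def by simp
  have EM: "\<And>g. E g = integral\<^sup>L M g" unfolding E_def Expect_def M_def by simp
  have setsM: "sets M = sets borel" unfolding M_def dens_measure_def by simp
  have measM: "\<And>g::'a \<Rightarrow> real. g \<in> borel_measurable borel \<Longrightarrow> g \<in> borel_measurable M"
  proof -
    have "(borel_measurable M :: ('a \<Rightarrow> real) set) = borel_measurable borel" by (rule measurable_cong_sets[OF setsM refl])
    then show "\<And>g::'a \<Rightarrow> real. g \<in> borel_measurable borel \<Longrightarrow> g \<in> borel_measurable M" by simp
  qed
  have phim: "\<And>i. i \<le> N \<Longrightarrow> \<phi> i \<in> borel_measurable M"
    using phi_poly poly_fun_meas measM by blast
  have lb: "(borel_measurable lborel :: ('a \<Rightarrow> real) set) = borel_measurable borel"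
    by (rule measurable_cong_sets[OF sets_lborel refl])
  have fm: "\<And>i. i < n \<Longrightarrow> f i \<in> borel_measurable M"
  proof -
    fix i assume "i < n"
    then have "f i \<in> borel_measurable borel" using f_meas[of i] unfolding lb by simp
    then show "f i \<in> borel_measurable M" by (rule measM)
  qed
  have phisq: "\<And>i. i \<le> N \<Longrightarrow> integrable M (\<lambda>x. (\<phi> i x)\<^sup>2)" using phi_sq M_def by simp
  have fsq: "\<And>i. i < n \<Longrightarrow> integrable M (\<lambda>x. (f i x)\<^sup>2)" using f_sq M_def by simp
  have phiphi: "\<And>i j. i \<le> N \<Longrightarrow> j \<le> N \<Longrightarrow> integrable M (\<lambda>x. \<phi> i x * \<phi> j x)"
    by (rule int_prod[OF phim phim phisq phisq])
  have phiint: "\<And>i. i \<le> N \<Longrightarrow> integrable M (\<phi> i)"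
    using phiphi[of _ 0] phi0 by simp
  define w where "w k = E (\<lambda>x. (\<phi> k x)\<^sup>2)" for k
  have w0: "w 0 = 1" unfolding w_def EM phi0 using P.prob_space by simp
  have wpos: "\<And>k. k \<le> N \<Longrightarrow> w k > 0" using pos w_def by simp
  have Ephi: "\<And>j. j \<le> N \<Longrightarrow> E (\<phi> j) = (if j = 0 then 1 else 0)"
  proof -
    fix j assume j: "j \<le> N"
    show "E (\<phi> j) = (if j = 0 then 1 else 0)"
    proof (cases "j = 0")
      case True
      have "\<phi> 0 = (\<lambda>x. 1)" using phi0 by auto
      then show ?thesis unfolding EM using True P.prob_space by simp
    next
      case False then show ?thesis using orth[OF j _ False] phi0 by simp
    qed
  qed
  have Ephiphi: "\<And>k l. k \<le> N \<Longrightarrow> l \<le> N \<Longrightarrow> E (\<lambda>x. \<phi> k x * \<phi> l x) = (if k = l then w k else 0)"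
    using orth by (auto simp: w_def power2_eq_square)
  have Efhat: "\<And>F i. E (fhat F i) = F $$ (i,0)"
  proof -
    fix F :: "real mat" and i
    have "E (fhat F i) = (\<Sum>j\<le>N. F $$ (i,j) * E (\<phi> j))"
      unfolding fhat_def EM
      by (subst Bochner_Integration.integral_sum) (auto intro!: phiint)
    also have "\<dots> = (\<Sum>j\<le>N. F $$ (i,j) * (if j = 0 then 1 else 0))"
      by (intro sum.cong refl) (simp add: Ephi)
    also have "\<dots> = F $$ (i,0)" by (simp add: if_distrib cong: if_cong)
    finally show "E (fhat F i) = F $$ (i,0)" .
  qed
  have Efhat2: "\<And>F i j. E (\<lambda>x. fhat F i x * fhat F j x) = (\<Sum>k\<le>N. F $$ (i,k) * F $$ (j,k) * w k)"
  proof -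
    fix F :: "real mat" and i j
    have eq: "(\<lambda>x. fhat F i x * fhat F j x) = (\<lambda>x. \<Sum>k\<le>N. \<Sum>l\<le>N. (F $$ (i,k) * F $$ (j,l)) * (\<phi> k x * \<phi> l x))"
      unfolding fhat_def by (auto simp: sum_product intro!: sum.cong simp: ac_simps)
    have "E (\<lambda>x. fhat F i x * fhat F j x) = (\<Sum>k\<le>N. \<Sum>l\<le>N. (F $$ (i,k) * F $$ (j,l)) * E (\<lambda>x. \<phi> k x * \<phi> l x))"
      unfolding eq EM
      by (subst Bochner_Integration.integral_sum, force intro!: Bochner_Integration.integrable_sum phiphi,
          intro sum.cong refl, subst Bochner_Integration.integral_sum) (auto intro!: phiphi)
    also have "\<dots> = (\<Sum>k\<le>N. \<Sum>l\<le>N. (F $$ (i,k) * F $$ (j,l)) * (if k = l then w k else 0))"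
      by (intro sum.cong refl) (simp add: Ephiphi)
    also have "\<dots> = (\<Sum>k\<le>N. F $$ (i,k) * F $$ (j,k) * w k)"
      by (intro sum.cong refl) (simp add: if_distrib cong: if_cong)
    finally show "E (\<lambda>x. fhat F i x * fhat F j x) = (\<Sum>k\<le>N. F $$ (i,k) * F $$ (j,k) * w k)" .
  qed
  have carW: "W \<in> carrier_mat (N+1) (N+1)" unfolding W_def by simp
  have carW1: "W1_inv_sqrt \<in> carrier_mat N N" unfolding W1_inv_sqrt_def by simp
  have FW: "(F * W) $$ (i,l) = F $$ (i,l) * w l"
    if F: "F \<in> carrier_mat n (N+1)" and i: "i < n" and l: "l < N+1" for F i l
  proof -
    have "(F * W) $$ (i,l) = (\<Sum>k<N+1. F $$ (i,k) * W $$ (k,l))" by (rule mult_entry[OF F carW i l])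
    also have "\<dots> = (\<Sum>k<N+1. if k = l then F $$ (i,k) * w l else 0)"
      using l by (intro sum.cong refl) (auto simp: W_def w_def)
    also have "\<dots> = F $$ (i,l) * w l" using l by simp
    finally show ?thesis .
  qed
  have FWF: "(F * W * F\<^sup>T) $$ (i,j) = (\<Sum>k\<le>N. F $$ (i,k) * F $$ (j,k) * w k)"
    if F: "F \<in> carrier_mat n (N+1)" and i: "i < n" and j: "j < n" for F i j
  proof -
    have c1: "F * W \<in> carrier_mat n (N+1)" using F carW by simp
    have c2: "F\<^sup>T \<in> carrier_mat (N+1) n" using F by simp
    have "(F * W * F\<^sup>T) $$ (i,j) = (\<Sum>k<N+1. (F * W) $$ (i,k) * F\<^sup>T $$ (k,j))"
      by (rule mult_entry[OF c1 c2 i j])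
    also have "\<dots> = (\<Sum>k<N+1. F $$ (i,k) * F $$ (j,k) * w k)"
      using F j by (intro sum.cong refl) (auto simp: FW[OF F i])
    also have "{..<N+1} = {..N}" by auto
    finally show ?thesis .
  qed
  have W1e: "(A * W1_inv_sqrt) $$ (i,c) = A $$ (i,c) / sqrt (w (Suc c))"
    if A: "A \<in> carrier_mat n N" and i: "i < n" and c: "c < N" for A i c
  proof -
    have "(A * W1_inv_sqrt) $$ (i,c) = (\<Sum>k<N. A $$ (i,k) * W1_inv_sqrt $$ (k,c))"
      by (rule mult_entry[OF A carW1 i c])
    also have "\<dots> = (\<Sum>k<N. if k = c then A $$ (i,c) / sqrt (w (Suc c)) else 0)"
      using c by (intro sum.cong refl) (auto simp: W1_inv_sqrt_def w_def)
    also have "\<dots> = A $$ (i,c) / sqrt (w (Suc c))" using c by simp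
    finally show ?thesis .
  qed
  have split: "(\<Sum>k\<le>N. g k) = g 0 + (\<Sum>k<N. g (Suc k))" for g :: "nat \<Rightarrow> real"
    by (subst lessThan_Suc_atMost[symmetric], rule sum.lessThan_Suc_shift)
  have sqw: "sqrt (w (Suc k)) * sqrt (w (Suc k)) = w (Suc k)" if "k < N" for k
    using wpos[of "Suc k"] that by simp
  have LLe: "(L * L\<^sup>T) $$ (i,j) = E (\<lambda>x. f i x * f j x) - E (f i) * E (f j)" if "i < n" "j < n" for i j
    using that L(2) L(1) by (simp add: Eff_def Ef_def)
  show ?thesis
  proof (intro conjI ballI impI)
    fix U :: "real mat" assume U: "U \<in> carrier_mat n N" and UU: "U * U\<^sup>T = 1\<^sub>m n"
    define F where "F = Fof U"
    have carLU: "L * U \<in> carrier_mat n N" using L(1) U by simp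
    have carF: "F \<in> carrier_mat n (N+1)" unfolding F_def Fof_def by simp
    have F0: "F $$ (i,0) = E (f i)" if "i < n" for i
      using that unfolding F_def Fof_def Ef_def by simp
    have FS: "F $$ (i,Suc c) = (L * U) $$ (i,c) / sqrt (w (Suc c))" if "i < n" "c < N" for i c
      using that W1e[OF carLU that] unfolding F_def Fof_def by simp
    have LUT: "(L * U) * (L * U)\<^sup>T = L * L\<^sup>T"
    proof -
      have "(L * U) * (L * U)\<^sup>T = (L * U) * (U\<^sup>T * L\<^sup>T)"
        using transpose_mult[OF L(1) U] by simp
      also have "\<dots> = L * (U * (U\<^sup>T * L\<^sup>T))"
        using L(1) U by (intro assoc_mult_mat[of _ n n _ N _ n]) auto
      also have "U * (U\<^sup>T * L\<^sup>T) = (U * U\<^sup>T) * L\<^sup>T"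
        using L(1) U by (intro assoc_mult_mat[symmetric, of _ n N _ n _ n]) auto
      also have "\<dots> = L\<^sup>T" using UU L(1) by simp
      finally show ?thesis .
    qed
    show "let F = Fof U in
              (\<forall>i<n. E (fhat F i) = E (f i)) \<and>
              mat n n (\<lambda>(i,j). E (\<lambda>x. fhat F i x * fhat F j x)) = F * W * F\<^sup>T \<and>
              F * W * F\<^sup>T = Eff"
      unfolding Let_def F_def[symmetric]
    proof (intro conjI allI impI)
      fix i assume "i < n" then show "E (fhat F i) = E (f i)" using Efhat F0 by simp
    next
      show "mat n n (\<lambda>(i,j). E (\<lambda>x. fhat F i x * fhat F j x)) = F * W * F\<^sup>T"
      proof (rule eq_matI)
        fix i j assume "i < dim_row (F * W * F\<^sup>T)" "j < dim_col (F * W * F\<^sup>T)"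
        then have i: "i < n" and j: "j < n" using carF carW by auto
        show "mat n n (\<lambda>(i,j). E (\<lambda>x. fhat F i x * fhat F j x)) $$ (i,j) = (F * W * F\<^sup>T) $$ (i,j)"
          unfolding FWF[OF carF i j] using i j by (simp add: Efhat2)
      qed (use carF carW in auto)
    next
      show "F * W * F\<^sup>T = Eff"
      proof (rule eq_matI)
        fix i j assume i: "i < dim_row Eff" and j: "j < dim_col Eff"
        then have i: "i < n" and j: "j < n" by (auto simp: Eff_def)
        have "(F * W * F\<^sup>T) $$ (i,j) = E (f i) * E (f j) + (\<Sum>k<N. (L * U) $$ (i,k) * (L * U) $$ (j,k))"
        proof -
          have "(F * W * F\<^sup>T) $$ (i,j) = (\<Sum>k\<le>N. F $$ (i,k) * F $$ (j,k) * w k)" by (rule FWF[OF carF i j])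
          also have "\<dots> = F $$ (i,0) * F $$ (j,0) * w 0 + (\<Sum>k<N. F $$ (i,Suc k) * F $$ (j,Suc k) * w (Suc k))"
            by (rule split)
          also have "(\<Sum>k<N. F $$ (i,Suc k) * F $$ (j,Suc k) * w (Suc k)) = (\<Sum>k<N. (L * U) $$ (i,k) * (L * U) $$ (j,k))"
          proof (intro sum.cong refl)
            fix k assume "k \<in> {..<N}"
            then have k: "k < N" by simp
            have pw: "sqrt (w (Suc k)) > 0" using wpos[of "Suc k"] k by simp
            show "F $$ (i,Suc k) * F $$ (j,Suc k) * w (Suc k) = (L * U) $$ (i,k) * (L * U) $$ (j,k)"
            proof -
              have g: "(a / t) * (b / t) * (t * t) = a * b" if "t > 0" for a b t :: real
                using that by (simp add: field_simps)
              show ?thesis unfolding FS[OF i k] FS[OF j k]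
                using g[OF pw, of "(L * U) $$ (i,k)" "(L * U) $$ (j,k)"] sqw[OF k] by simp
            qed
          qed
          finally show ?thesis using F0 i j w0 by simp
        qed
        also have "(\<Sum>k<N. (L * U) $$ (i,k) * (L * U) $$ (j,k)) = ((L * U) * (L * U)\<^sup>T) $$ (i,j)"
        proof -
          have c: "(L * U)\<^sup>T \<in> carrier_mat N n" using carLU by simp
          have d: "dim_row (L * U) = n" "dim_col (L * U) = N" using carLU by auto
          show ?thesis unfolding mult_entry[OF carLU c i j] using d j by (intro sum.cong) auto
        qed
        also have "\<dots> = E (\<lambda>x. f i x * f j x) - E (f i) * E (f j)" unfolding LUT by (rule LLe[OF i j])
        finally show "(F * W * F\<^sup>T) $$ (i,j) = Eff $$ (i,j)" using i j by (simp add: Eff_def)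
      qed (use carF carW in \<open>auto simp: Eff_def\<close>)
    qed
  next
    fix F :: "real mat" assume carF: "F \<in> carrier_mat n (N+1)"
      and h: "(\<forall>i<n. E (fhat F i) = E (f i)) \<and> mat n n (\<lambda>(i,j). E (\<lambda>x. fhat F i x * fhat F j x)) = Eff"
    have F0: "F $$ (i,0) = E (f i)" if "i < n" for i using h that Efhat by metis
    have FF: "E (\<lambda>x. fhat F i x * fhat F j x) = E (\<lambda>x. f i x * f j x)" if "i < n" "j < n" for i j
    proof -
      have "mat n n (\<lambda>(i,j). E (\<lambda>x. fhat F i x * fhat F j x)) $$ (i,j) = Eff $$ (i,j)" using h by simp
      then show ?thesis using that by (simp add: Eff_def)
    qed
    define Lf where "Lf i k = L $$ (i,k)" for i k
    define Hf where "Hf i c = F $$ (i,Suc c) * sqrt (w (Suc c))" for i c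
    have Gram: "\<forall>i<n. \<forall>j<n. ipr N (Hf i) (Hf j) = ipr n (Lf i) (Lf j)"
    proof (intro allI impI)
      fix i j assume i: "i < n" and j: "j < n"
      have "ipr N (Hf i) (Hf j) = (\<Sum>k<N. F $$ (i,Suc k) * F $$ (j,Suc k) * w (Suc k))"
        unfolding ipr_def Hf_def
      proof (intro sum.cong refl)
        fix k assume "k \<in> {..<N}"
        then have k: "k < N" by simp
        have "F $$ (i, Suc k) * sqrt (w (Suc k)) * (F $$ (j, Suc k) * sqrt (w (Suc k)))
              = F $$ (i, Suc k) * F $$ (j, Suc k) * (sqrt (w (Suc k)) * sqrt (w (Suc k)))" by (simp add: ac_simps)
        then show "F $$ (i, Suc k) * sqrt (w (Suc k)) * (F $$ (j, Suc k) * sqrt (w (Suc k)))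
              = F $$ (i, Suc k) * F $$ (j, Suc k) * w (Suc k)" by (simp only: sqw[OF k])
      qed
      also have "\<dots> = (\<Sum>k\<le>N. F $$ (i,k) * F $$ (j,k) * w k) - F $$ (i,0) * F $$ (j,0) * w 0"
        unfolding split by simp
      also have "\<dots> = E (\<lambda>x. f i x * f j x) - E (f i) * E (f j)"
        unfolding Efhat2[symmetric] FF[OF i j] F0[OF i] F0[OF j] w0 by simp
      also have "\<dots> = (L * L\<^sup>T) $$ (i,j)" using LLe[OF i j] by simp
      also have "\<dots> = ipr n (Lf i) (Lf j)"
        using L(1) i j by (subst mult_entry[of _ n n _ n]) (auto simp: ipr_def Lf_def)
      finally show "ipr N (Hf i) (Hf j) = ipr n (Lf i) (Lf j)" .
    qed
    obtain Uf where Uo: "\<forall>i<n. \<forall>j<n. ipr N (Uf i) (Uf j) = (if i = j then 1 else 0)"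
      and Ur: "\<forall>i<n. \<forall>c<N. Hf i c = (\<Sum>k<n. Lf i k * Uf k c)"
      using la_main[OF Nn Gram] by blast
    define U where "U = mat n N (\<lambda>(i,c). Uf i c)"
    have carU: "U \<in> carrier_mat n N" unfolding U_def by simp
    have carLU: "L * U \<in> carrier_mat n N" using L(1) carU by simp
    show "\<exists>U \<in> carrier_mat n N. U * U\<^sup>T = 1\<^sub>m n \<and> F = Fof U"
    proof (intro bexI[of _ U] conjI carU)
      show "U * U\<^sup>T = 1\<^sub>m n"
      proof (rule eq_matI)
        fix i j assume "i < dim_row (1\<^sub>m n :: real mat)" "j < dim_col (1\<^sub>m n :: real mat)"
        then have i: "i < n" and j: "j < n" by auto
        have "(U * U\<^sup>T) $$ (i,j) = ipr N (Uf i) (Uf j)"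
          using carU i j by (subst mult_entry[of _ n N _ n]) (auto simp: ipr_def U_def)
        then show "(U * U\<^sup>T) $$ (i,j) = 1\<^sub>m n $$ (i,j)" using Uo i j by simp
      qed (use carU in auto)
      show "F = Fof U"
      proof (rule eq_matI)
        fix i j assume "i < dim_row (Fof U)" "j < dim_col (Fof U)"
        then have i: "i < n" and j: "j < N+1" by (auto simp: Fof_def)
        show "F $$ (i,j) = Fof U $$ (i,j)"
        proof (cases j)
          case 0 then show ?thesis using i F0[OF i] by (simp add: Fof_def Ef_def)
        next
          case (Suc c)
          then have c: "c < N" using j by simp
          have "(L * U) $$ (i,c) = Hf i c"
            using carU L(1) i c Ur by (subst mult_entry[of _ n n _ N]) (auto simp: Lf_def U_def)
          then have "(L * U * W1_inv_sqrt) $$ (i,c) = F $$ (i,Suc c)"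
            unfolding W1e[OF carLU i c] Hf_def using wpos[of "Suc c"] c by simp
          then show ?thesis using i j Suc by (simp add: Fof_def)
        qed
      qed (use carF in \<open>auto simp: Fof_def\<close>)
    qed
  qed
qed
end
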